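(* Let $\mathcal{X}$ be a set, $K\ge1$, and let classifiers be maps $\mathcal{X}\to[K]$. Let $\mathcal{B}$ assign to each $x\in\mathcal{X}$ a set $\mathcal{B}(x)\subseteq\mathcal{X}$, and for $V\subseteq\mathcal{X}$ let $\mathcal{N}(V)=\{x\in\mathcal{X}:\exists x'\in V \text{ with } \mathcal{B}(x)\cap\mathcal{B}(x')\neq\emptyset\}$. For a classifier $F$ let $\mathcal{S}_{\mathcal{B}}(F)=\{x: F(x)=F(x')\ \forall x'\in\mathcal{B}(x)\}$. Let $F$, $H$, $G_{pl}$ be classifiers. Define $\mathcal{M}(F)=\{x:F(x)\neq H(x)\}$, $\mathcal{M}(G_{pl})=\{x:G_{pl}(x)\neq H(x)\}$, $\mathcal{M}_{pl}(F)=\{x:F(x)\neq G_{pl}(x)\}$, and write $A^c$ for the complement of $A$ in $\mathcal{X}$. Let $S=\mathcal{S}_{\mathcal{B}}(F)\cap\mathcal{S}_{\mathcal{B}}(H)$ and $V=\mathcal{M}(F)\cap\mathcal{M}(G_{pl})\cap S$. Then $\mathcal{N}(V)\cap\mathcal{M}^c(F)\cap S=\emptyset$ and $\mathcal{N}(V)\cap\mathcal{M}^c(G_{pl})\cap S\subseteq\mathcal{M}_{pl}(F)$.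
   Context: $G_{pl}$ plays the role of a pseudo-labeler and $H$ of a reference classifier. *)

theory Defs
  imports Main
begin

definition nbhd :: "'a set \<Rightarrow> ('a \<Rightarrow> 'a set) \<Rightarrow> 'a set \<Rightarrow> 'a set" where
  "nbhd X B V = {x \<in> X. \<exists>x'\<in>V. B x \<inter> B x' \<noteq> {}}"

definition robust_set :: "'a set \<Rightarrow> ('a \<Rightarrow> 'a set) \<Rightarrow> ('a \<Rightarrow> nat) \<Rightarrow> 'a set" where
  "robust_set X B F = {x \<in> X. \<forall>x'\<in>B x. F x = F x'}"

definition mistakes :: "'a set \<Rightarrow> ('a \<Rightarrow> nat) \<Rightarrow> ('a \<Rightarrow> nat) \<Rightarrow> 'a set" where
  "mistakes X F G = {x \<in> X. F x \<noteq> G x}"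

end

theory Submission
  imports Defs
begin

theorem mainTheorem2:
  fixes X :: "'a set" and K :: nat and B :: "'a \<Rightarrow> 'a set"
    and F H G_pl :: "'a \<Rightarrow> nat"
  assumes "K \<ge> 1"
    and "\<And>x. x \<in> X \<Longrightarrow> B x \<subseteq> X"
    and "F ` X \<subseteq> {1..K}" and "H ` X \<subseteq> {1..K}" and "G_pl ` X \<subseteq> {1..K}"
  defines "S \<equiv> robust_set X B F \<inter> robust_set X B H"
  defines "V \<equiv> mistakes X F H \<inter> mistakes X G_pl H \<inter> S"
  shows "nbhd X B V \<inter> (X - mistakes X F H) \<inter> S = {} \<and>
         nbhd X B V \<inter> (X - mistakes X G_pl H) \<inter> S \<subseteq> mistakes X F G_pl"
  unfolding S_def V_def nbhd_def robust_set_def mistakes_def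
  by (auto; metis)

end
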